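(* Let $f_1(x)=\frac25x$ for $x<0$ and $f_1(x)=\frac15x$ for $x\ge0$, let $f_2(x)=\frac13x$, and for $\varepsilon>0$ let $\widehat f_{2}(x)=\frac13x+\varepsilon$. Consider the CPLIFSs $\mathcal{F}=\{f_1,f_2\}$ and $\widehat{\mathcal{F}}_\varepsilon=\{f_1,\widehat f_2\}$. Let $s_0$ be the unique $s>0$ with $(1/3)^s+(1/5)^s=1$. Then for every $\varepsilon>0$ the natural dimension of $\widehat{\mathcal{F}}_\varepsilon$ equals $s_0$, while the natural dimension of $\mathcal{F}$ is strictly larger than $s_0$. In particular the natural dimension of $\widehat{\mathcal F}_\varepsilon$ does not converge to that of $\mathcal F$ as $\varepsilon\to0$.
   Context: For a CPLIFS (finite family $\{f_k\}_{k=1}^m$ of continuous piecewise linear contractions of $\mathbb{R}$ with nonzero slopes of absolute value $<1$ and finitely many breaking points), let $I$ be the smallest nonempty compact interval with $f_k(I)\subset I$ for all $k$; if the attractor (the unique nonempty compact $\Lambda=\bigcup_kf_k(\Lambda)$) is a single point $\phi$ (e.g. a common fixed point), set $I=[\phi-\frac12,\phi+\frac12]$. The natural pressure is $\Phi(s)=\limsup_{n\to\infty}\frac1n\log\sum_{(i_1,\dots,i_n)\in[m]^n}|f_{i_1}\circ\dots\circ f_{i_n}(I)|^s$; it is strictly decreasing with $\Phi(0)>0$ and $\Phi(s)\to-\infty$, and the natural dimension is its unique zero. *)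

theory Defs
  imports "HOL-Analysis.Analysis"
begin

text \<open>A CPLIFS is represented as a list of maps fs = [f_1, ..., f_m] (indexed 0..m-1).\<close>

definition attractor :: "(real \<Rightarrow> real) list \<Rightarrow> real set" where
  "attractor fs = (THE L. L \<noteq> {} \<and> compact L \<and> L = (\<Union>f\<in>set fs. f ` L))"

definition inv_interval :: "(real \<Rightarrow> real) list \<Rightarrow> real set \<Rightarrow> bool" where
  "inv_interval fs J \<longleftrightarrow> (\<exists>a b. a \<le> b \<and> J = {a..b}) \<and> (\<forall>f\<in>set fs. f ` J \<subseteq> J)"

definition cplifs_I :: "(real \<Rightarrow> real) list \<Rightarrow> real set" where
  "cplifs_I fs =
     (if \<exists>p. attractor fs = {p}
      then (let p = (THE p. attractor fs = {p}) in {p - 1/2 .. p + 1/2})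
      else (THE I. inv_interval fs I \<and> (\<forall>J. inv_interval fs J \<longrightarrow> I \<subseteq> J)))"

definition word_map :: "(real \<Rightarrow> real) list \<Rightarrow> nat list \<Rightarrow> real \<Rightarrow> real" where
  "word_map fs w = foldr (\<lambda>i g. (fs ! i) \<circ> g) w id"

definition words :: "nat \<Rightarrow> nat \<Rightarrow> nat list set" where
  "words m n = {w. length w = n \<and> set w \<subseteq> {..<m}}"

definition nat_pressure :: "(real \<Rightarrow> real) list \<Rightarrow> real \<Rightarrow> ereal" where
  "nat_pressure fs s = limsup (\<lambda>n. ereal ((1 / real n) *
      ln (\<Sum>w\<in>words (length fs) n. diameter (word_map fs w ` cplifs_I fs) powr s)))"

definition natural_dim :: "(real \<Rightarrow> real) list \<Rightarrow> real" where
  "natural_dim fs = (THE s. nat_pressure fs s = 0)"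

end

theory Submission
  imports Defs
begin


lemma word_map_Nil[simp]: "word_map fs [] = id"
  by (simp add: word_map_def)

lemma word_map_Cons[simp]: "word_map fs (i # w) = (fs ! i) \<circ> word_map fs w"
  by (simp add: word_map_def)

lemma words_Suc: "words m (Suc n) = (\<lambda>(i,w). i # w) ` ({..<m} \<times> words m n)"
proof
  show "words m (Suc n) \<subseteq> (\<lambda>(i,w). i # w) ` ({..<m} \<times> words m n)"
  proof
    fix x assume "x \<in> words m (Suc n)"
    then obtain i w where "x = i # w" "i < m" "w \<in> words m n"
      by (cases x) (auto simp: words_def)
    then show "x \<in> (\<lambda>(i,w). i # w) ` ({..<m} \<times> words m n)" by force
  qed
qed (auto simp: words_def)

lemma finite_words: "finite (words m n)"
proof -
  have "words m n = {xs. set xs \<subseteq> {..<m} \<and> length xs = n}" by (auto simp: words_def)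
  then show ?thesis using finite_lists_length_eq[of "{..<m}" n] by simp
qed

lemma sum_words_prod:
  fixes g :: "nat \<Rightarrow> real"
  shows "(\<Sum>w\<in>words m n. prod_list (map g w)) = (\<Sum>i<m. g i) ^ n"
proof (induction n)
  case 0
  have "words m 0 = {[]}" by (auto simp: words_def)
  then show ?case by simp
next
  case (Suc n)
  have inj: "inj_on (\<lambda>(i,w). i # w) ({..<m} \<times> words m n)" by (auto simp: inj_on_def)
  have "(\<Sum>w\<in>words m (Suc n). prod_list (map g w))
      = (\<Sum>p\<in>{..<m} \<times> words m n. prod_list (map g ((\<lambda>(i,w). i # w) p)))"
    unfolding words_Suc by (subst sum.reindex[OF inj]) simp
  also have "\<dots> = (\<Sum>i<m. \<Sum>w\<in>words m n. g i * prod_list (map g w))"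
    using sum.cartesian_product[of "\<lambda>i w. prod_list (map g (i#w))" "words m n" "{..<m}"]
    by (simp add: split_def)
  also have "\<dots> = (\<Sum>i<m. g i) * (\<Sum>w\<in>words m n. prod_list (map g w))"
    by (rule sum_product[symmetric])
  finally show ?case using Suc by simp
qed

lemma prod_list_powr:
  fixes g :: "nat \<Rightarrow> real"
  assumes "\<And>i. g i > 0"
  shows "prod_list (map g w) powr s = prod_list (map (\<lambda>i. g i powr s) w)"
proof (induction w)
  case (Cons i w)
  have "prod_list (map g w) > 0" using assms by (induction w) auto
  then show ?case using Cons assms[of i] by (simp add: powr_mult less_imp_le)
qed simp

lemma prod_list_pos:
  fixes g :: "nat \<Rightarrow> real"
  assumes "\<And>i. g i > 0"
  shows "prod_list (map g w) > 0"
  using assms by (induction w) auto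

lemma attractor_sub:
  fixes fs :: "(real \<Rightarrow> real) list"
  assumes lip: "\<And>f x y. f \<in> set fs \<Longrightarrow> \<bar>f x - f y\<bar> \<le> c * \<bar>x - y\<bar>"
    and c: "0 \<le> c" "c < 1"
    and L1: "compact L1" "L1 = (\<Union>f\<in>set fs. f ` L1)"
    and L2: "L2 \<noteq> {}" "compact L2" "L2 = (\<Union>f\<in>set fs. f ` L2)"
  shows "L1 \<subseteq> L2"
proof
  define D where "D = diameter (L1 \<union> L2)"
  have bd: "bounded (L1 \<union> L2)" using L1 L2 compact_imp_bounded by auto
  have claim: "\<forall>x\<in>L1. \<exists>y\<in>L2. \<bar>x - y\<bar> \<le> c ^ n * D" for n
  proof (induction n)
    case 0
    show ?case
    proof
      fix x assume "x \<in> L1"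
      obtain y where "y \<in> L2" using L2 by auto
      then have "dist x y \<le> D" unfolding D_def
        using diameter_bounded_bound[OF bd] \<open>x \<in> L1\<close> by auto
      then show "\<exists>y\<in>L2. \<bar>x - y\<bar> \<le> c ^ 0 * D" using \<open>y \<in> L2\<close> by (auto simp: dist_real_def)
    qed
  next
    case (Suc n)
    show ?case
    proof
      fix x assume "x \<in> L1"
      then obtain f x' where f: "f \<in> set fs" "x' \<in> L1" "x = f x'" using L1(2) by blast
      then obtain y' where y': "y' \<in> L2" "\<bar>x' - y'\<bar> \<le> c ^ n * D" using Suc by blast
      have "f y' \<in> L2" using L2(3) f y' by blast
      moreover have "\<bar>x - f y'\<bar> \<le> c ^ Suc n * D"
      proof -
        have "\<bar>x - f y'\<bar> \<le> c * \<bar>x' - y'\<bar>" using lip f by simp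
        also have "\<dots> \<le> c * (c ^ n * D)" using y' c by (simp add: mult_left_mono)
        finally show ?thesis by simp
      qed
      ultimately show "\<exists>y\<in>L2. \<bar>x - y\<bar> \<le> c ^ Suc n * D" by blast
    qed
  qed
  fix x assume x: "x \<in> L1"
  have "x \<in> closure L2"
    unfolding closure_approachable
  proof (intro allI impI)
    fix e :: real assume e: "e > 0"
    have "(\<lambda>n. c ^ n * D) \<longlonglongrightarrow> 0 * D"
      by (intro tendsto_mult LIMSEQ_power_zero tendsto_const) (use c in auto)
    then have "eventually (\<lambda>n. c ^ n * D < e) sequentially"
      using e by (auto dest: order_tendstoD(2))
    then obtain n where "c ^ n * D < e" by (auto simp: eventually_sequentially)
    then obtain y where "y \<in> L2" "\<bar>x - y\<bar> < e" using claim[of n] x by force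
    then show "\<exists>y\<in>L2. dist y x < e" by (auto simp: dist_real_def abs_minus_commute)
  qed
  then show "x \<in> L2" using L2 compact_imp_closed closure_closed by metis
qed

lemma attractor_eq:
  fixes fs :: "(real \<Rightarrow> real) list"
  assumes lip: "\<And>f x y. f \<in> set fs \<Longrightarrow> \<bar>f x - f y\<bar> \<le> c * \<bar>x - y\<bar>"
    and c: "0 \<le> c" "c < 1"
    and L: "L \<noteq> {}" "compact L" "L = (\<Union>f\<in>set fs. f ` L)"
  shows "attractor fs = L"
  unfolding attractor_def
proof (rule the_equality)
  fix L' assume "L' \<noteq> {} \<and> compact L' \<and> L' = (\<Union>f\<in>set fs. f ` L')"
  then show "L' = L" using attractor_sub[OF lip c] L by (metis subset_antisym)
qed (use L in auto)

lemma pressure_limit: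
  fixes S :: "nat \<Rightarrow> real"
  assumes "C1 > 0" "C2 > 0" "B > 0"
    and bnd: "\<And>n. n > 0 \<Longrightarrow> C1 * B ^ n \<le> S n \<and> S n \<le> C2 * B ^ n"
  shows "limsup (\<lambda>n. ereal ((1 / real n) * ln (S n))) = ereal (ln B)"
proof -
  have ev1: "eventually (\<lambda>n. ln C1 / real n + ln B \<le> (1 / real n) * ln (S n)) sequentially"
    using eventually_gt_at_top[of 0]
  proof eventually_elim
    case (elim n)
    have "C1 * B ^ n > 0" using assms by simp
    then have "ln (C1 * B ^ n) \<le> ln (S n)" using bnd[OF elim] by simp
    then have "ln C1 + real n * ln B \<le> ln (S n)" using assms by (simp add: ln_mult ln_realpow)
    then have "(ln C1 + real n * ln B) / real n \<le> ln (S n) / real n"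
      using elim by (simp add: divide_right_mono)
    then show ?case using elim by (simp add: add_divide_distrib)
  qed
  have ev2: "eventually (\<lambda>n. (1 / real n) * ln (S n) \<le> ln C2 / real n + ln B) sequentially"
    using eventually_gt_at_top[of 0]
  proof eventually_elim
    case (elim n)
    have "C1 * B ^ n > 0" using assms by simp
    then have "S n > 0" using bnd[OF elim] by linarith
    then have "ln (S n) \<le> ln (C2 * B ^ n)" using bnd[OF elim] by simp
    then have "ln (S n) \<le> ln C2 + real n * ln B" using assms by (simp add: ln_mult ln_realpow)
    then have "ln (S n) / real n \<le> (ln C2 + real n * ln B) / real n"
      using elim by (simp add: divide_right_mono)
    then show ?case using elim by (simp add: add_divide_distrib)
  qed
  have l1: "(\<lambda>n. ln C1 / real n + ln B) \<longlonglongrightarrow> 0 + ln B"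
    by (intro tendsto_add lim_const_over_n tendsto_const)
  have l2: "(\<lambda>n. ln C2 / real n + ln B) \<longlonglongrightarrow> 0 + ln B"
    by (intro tendsto_add lim_const_over_n tendsto_const)
  have "(\<lambda>n. (1 / real n) * ln (S n)) \<longlonglongrightarrow> ln B"
    using tendsto_sandwich[OF ev1 ev2] l1 l2 by simp
  then have "(\<lambda>n. ereal ((1 / real n) * ln (S n))) \<longlonglongrightarrow> ereal (ln B)"
    by (rule tendsto_ereal)
  then show ?thesis by (intro lim_imp_Limsup) auto
qed

lemma natural_dim_eq:
  assumes P: "\<And>s. nat_pressure fs s = ereal (ln (B s))"
    and Bpos: "\<And>s. B s > 0"
    and Bdec: "\<And>s t. s < t \<Longrightarrow> B t < B s"
    and z: "B s1 = 1"
  shows "natural_dim fs = s1"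
  unfolding natural_dim_def
proof (rule the_equality)
  show "nat_pressure fs s1 = 0" using P z by (simp add: zero_ereal_def)
next
  fix s assume "nat_pressure fs s = 0"
  then have "ln (B s) = 0" using P by (simp add: zero_ereal_def)
  then have "B s = 1" using Bpos[of s] by simp
  then show "s = s1" using Bdec[of s s1] Bdec[of s1 s] z by (cases s s1 rule: linorder_cases) auto
qed




abbreviation F1 :: "real \<Rightarrow> real" where
  "F1 \<equiv> (\<lambda>x::real. if x < 0 then 2/5 * x else 1/5 * x)"
abbreviation G :: "real \<Rightarrow> real \<Rightarrow> real" where
  "G e \<equiv> (\<lambda>x. 1/3 * x + e)"
abbreviation F2 :: "real \<Rightarrow> real" where
  "F2 \<equiv> (\<lambda>x. 1/3 * x)"

lemma lip_F1: "\<bar>F1 x - F1 y\<bar> \<le> 1/2 * \<bar>x - y\<bar>"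
  by (auto simp: abs_if)

lemma lip_G: "\<bar>G e x - G e y\<bar> \<le> 1/2 * \<bar>x - y\<bar>"
  by (auto simp: abs_if)

lemma lip_F2: "\<bar>F2 x - F2 y\<bar> \<le> 1/2 * \<bar>x - y\<bar>"
  by (auto simp: abs_if)

lemma F1_alt: "F1 = (\<lambda>x. 2/5 * min x 0 + 1/5 * max x 0)"
  by (auto simp: fun_eq_iff min_def max_def)

lemma cont_F1: "continuous_on UNIV F1"
  unfolding F1_alt by (intro continuous_intros)

lemma cont_img_closure:
  fixes f :: "real \<Rightarrow> real"
  assumes "continuous_on UNIV f" "bounded S"
  shows "f ` closure S = closure (f ` S)"
proof
  show "f ` closure S \<subseteq> closure (f ` S)"
    using continuous_image_closure_subset[of UNIV f S] assms by auto
  have "compact (f ` closure S)"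
    using assms by (intro compact_continuous_image) (auto intro: continuous_on_subset compact_closure[THEN iffD2])
  then show "closure (f ` S) \<subseteq> f ` closure S"
    by (intro closure_minimal) (auto intro: compact_imp_closed closure_subset[THEN subsetD])
qed




lemma eps_inv:
  assumes e: "e > 0" and w: "set w \<subseteq> {..<2}" and x: "x \<in> {0..3*e/2}"
  shows "word_map [F1, G e] w x \<in> {0..3*e/2}"
  using w x
proof (induction w arbitrary: x)
  case (Cons i w)
  then have h: "word_map [F1, G e] w x \<in> {0..3*e/2}" by auto
  have "i = 0 \<or> i = 1" using Cons.prems by auto
  then show ?case using h e by auto
qed simp

definition Seps :: "real \<Rightarrow> real set" where
  "Seps e = {word_map [F1, G e] w 0 | w. set w \<subseteq> {..<2}}"

lemma Seps_sub: "e > 0 \<Longrightarrow> Seps e \<subseteq> {0..3*e/2}"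
  unfolding Seps_def using eps_inv by fastforce

lemma Seps_eq: "Seps e = F1 ` Seps e \<union> G e ` Seps e"
proof
  show "Seps e \<subseteq> F1 ` Seps e \<union> G e ` Seps e"
  proof
    fix y assume "y \<in> Seps e"
    then obtain w where w: "set w \<subseteq> {..<2}" "y = word_map [F1, G e] w 0" by (auto simp: Seps_def)
    show "y \<in> F1 ` Seps e \<union> G e ` Seps e"
    proof (cases w)
      case Nil
      then have "y = F1 (word_map [F1, G e] [] 0)" using w by simp
      moreover have "word_map [F1, G e] [] 0 \<in> Seps e" unfolding Seps_def by (intro CollectI exI[of _ "[]"]) simp
      ultimately show ?thesis by blast
    next
      case (Cons i w')
      then have i: "i = 0 \<or> i = 1" and w': "set w' \<subseteq> {..<2}" using w by auto
      have m: "word_map [F1, G e] w' 0 \<in> Seps e" using w' unfolding Seps_def by blast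
      show ?thesis
      proof (cases "i = 0")
        case True
        then have "y = F1 (word_map [F1, G e] w' 0)" using w Cons by simp
        then show ?thesis using m by blast
      next
        case False
        then have "y = G e (word_map [F1, G e] w' 0)" using w Cons i by simp
        then show ?thesis using m by blast
      qed
    qed
  qed
next
  show "F1 ` Seps e \<union> G e ` Seps e \<subseteq> Seps e"
  proof
    fix y assume "y \<in> F1 ` Seps e \<union> G e ` Seps e"
    then obtain w where w: "set w \<subseteq> {..<2}"
      and "y = F1 (word_map [F1, G e] w 0) \<or> y = G e (word_map [F1, G e] w 0)"
      by (auto simp: Seps_def)
    then consider "y = word_map [F1, G e] (0 # w) 0" | "y = word_map [F1, G e] (1 # w) 0" by auto
    then show "y \<in> Seps e" unfolding Seps_def using w by cases (fastforce+)
  qed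
qed

lemma attractor_eps:
  assumes e: "e > 0"
  shows "attractor [F1, G e] = closure (Seps e)"
proof (rule attractor_eq[where c="1/2"])
  fix f x y assume "f \<in> set [F1, G e]"
  then show "\<bar>f x - f y\<bar> \<le> 1/2 * \<bar>x - y\<bar>" using lip_F1 lip_G by auto
next
  have "0 \<in> Seps e" unfolding Seps_def by (intro CollectI exI[of _ "[]"]) simp
  then show "closure (Seps e) \<noteq> {}" using closure_subset by blast
  have bd: "bounded (Seps e)" using Seps_sub[OF e] bounded_subset bounded_closed_interval by metis
  then show "compact (closure (Seps e))" by (simp add: compact_closure)
  have cG: "continuous_on UNIV (G e)" by (intro continuous_intros)
  have "closure (Seps e) = closure (F1 ` Seps e) \<union> closure (G e ` Seps e)"
    by (subst Seps_eq) (simp add: closure_Un)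
  also have "\<dots> = F1 ` closure (Seps e) \<union> G e ` closure (Seps e)"
    using cont_img_closure[OF cont_F1 bd] cont_img_closure[OF cG bd] by simp
  finally show "closure (Seps e) = (\<Union>f\<in>set [F1, G e]. f ` closure (Seps e))" by simp
qed simp_all

lemma not_single_eps:
  assumes e: "e > 0"
  shows "\<not> (\<exists>p. attractor [F1, G e] = {p})"
proof
  assume "\<exists>p. attractor [F1, G e] = {p}"
  then obtain p where p: "closure (Seps e) = {p}" using attractor_eps[OF e] by auto
  have "0 \<in> Seps e" unfolding Seps_def by (intro CollectI exI[of _ "[]"]) simp
  moreover have "e \<in> Seps e"
  proof -
    have "word_map [F1, G e] [1] 0 = e" by simp
    then show ?thesis unfolding Seps_def by (intro CollectI exI[of _ "[1]"]) simp
  qed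
  ultimately have "0 \<in> closure (Seps e)" "e \<in> closure (Seps e)" using closure_subset by blast+
  then show False using p e by auto
qed

lemma I_eps:
  assumes e: "e > 0"
  shows "cplifs_I [F1, G e] = {0..3*e/2}"
proof -
  have inv: "inv_interval [F1, G e] {0..3*e/2}"
    unfolding inv_interval_def using e by (auto intro!: exI[of _ 0] exI[of _ "3*e/2"])
  have minimal: "{0..3*e/2} \<subseteq> J" if "inv_interval [F1, G e] J" for J
  proof -
    from that obtain a b where ab: "a \<le> b" "J = {a..b}" "F1 ` J \<subseteq> J" "G e ` J \<subseteq> J"
      unfolding inv_interval_def by auto
    have aJ: "a \<in> J" and bJ: "b \<in> J" using ab by auto
    have "F1 a \<in> J" "F1 b \<in> J" "G e a \<in> J" "G e b \<in> J"
      using ab(3,4) aJ bJ by blast+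
    then have h: "F1 a \<ge> a" "G e b \<le> b" using ab(2) by auto
    from h(1) have "a \<le> 0" by (cases "a < 0") auto
    moreover from h(2) have "b \<ge> 3*e/2" by simp
    ultimately have "a \<le> 0" "b \<ge> 3*e/2" by auto
    then show ?thesis using ab by auto
  qed
  have "(THE I. inv_interval [F1, G e] I \<and> (\<forall>J. inv_interval [F1, G e] J \<longrightarrow> I \<subseteq> J)) = {0..3*e/2}"
  proof (rule the_equality)
    fix I assume "inv_interval [F1, G e] I \<and> (\<forall>J. inv_interval [F1, G e] J \<longrightarrow> I \<subseteq> J)"
    then show "I = {0..3*e/2}" using inv minimal by blast
  qed (use inv minimal in blast)
  then show ?thesis unfolding cplifs_I_def using not_single_eps[OF e] by simp
qed




definition rho :: "nat \<Rightarrow> real" where "rho i = (if i = 0 then 1/5 else 1/3)"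

lemma rho0[simp]: "rho 0 = 1/5" and rho1[simp]: "rho (Suc 0) = 1/3" by (simp_all add: rho_def)

lemma rho_pos: "rho i > 0" by (simp add: rho_def)

lemma eps_img:
  assumes e: "e > 0" and w: "set w \<subseteq> {..<2}"
  shows "\<exists>\<alpha>\<ge>0. word_map [F1, G e] w ` {0..3*e/2} = {\<alpha>..\<alpha> + 3*e/2 * prod_list (map rho w)}"
  using w
proof (induction w)
  case Nil
  then show ?case by (intro exI[of _ 0]) simp
next
  case (Cons i w)
  then obtain \<alpha> where a: "\<alpha> \<ge> 0" "word_map [F1, G e] w ` {0..3*e/2} = {\<alpha>..\<alpha> + 3*e/2 * prod_list (map rho w)}"
    by auto
  define r where "r = prod_list (map rho w)"
  have r: "r > 0" unfolding r_def using prod_list_pos rho_pos by blast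
  have le: "\<alpha> \<le> \<alpha> + 3*e/2 * r" using r e by simp
  have im: "word_map [F1, G e] (i # w) ` {0..3*e/2} = ([F1, G e] ! i) ` {\<alpha>..\<alpha> + 3*e/2 * r}"
  proof -
    have "word_map [F1, G e] (i # w) ` {0..3*e/2} = ([F1, G e] ! i) ` (word_map [F1, G e] w ` {0..3*e/2})"
      by (simp only: word_map_Cons image_comp)
    then show ?thesis using a(2) by (simp add: r_def)
  qed
  have "i = 0 \<or> i = 1" using Cons.prems by auto
  then show ?case
  proof
    assume i: "i = 0"
    have "F1 ` {\<alpha>..\<alpha> + 3*e/2 * r} = (\<lambda>x. 1/5 * x + 0) ` {\<alpha>..\<alpha> + 3*e/2 * r}"
      using a(1) by (intro image_cong) auto
    also have "\<dots> = {1/5 * \<alpha> + 0 .. 1/5 * (\<alpha> + 3*e/2 * r) + 0}"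
      using le by (subst image_affinity_atLeastAtMost) auto
    finally have "word_map [F1, G e] (i # w) ` {0..3*e/2} = {1/5 * \<alpha> .. 1/5 * \<alpha> + 3*e/2 * (rho i * r)}"
      using im i by (simp del: word_map_Cons add: algebra_simps)
    then show ?thesis using a(1)
      by (intro exI[of _ "1/5 * \<alpha>"]) (simp del: word_map_Cons add: r_def)
  next
    assume i: "i = 1"
    have "G e ` {\<alpha>..\<alpha> + 3*e/2 * r} = {1/3 * \<alpha> + e .. 1/3 * (\<alpha> + 3*e/2 * r) + e}"
      using le by (subst image_affinity_atLeastAtMost) auto
    then have "word_map [F1, G e] (i # w) ` {0..3*e/2} = {1/3 * \<alpha> + e .. 1/3 * \<alpha> + e + 3*e/2 * (rho i * r)}"
      using im i by (simp del: word_map_Cons add: algebra_simps)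
    then show ?thesis using a(1) e
      by (intro exI[of _ "1/3 * \<alpha> + e"]) (simp del: word_map_Cons add: r_def)
  qed
qed

lemma eps_diam:
  assumes e: "e > 0" and w: "set w \<subseteq> {..<2}"
  shows "diameter (word_map [F1, G e] w ` cplifs_I [F1, G e]) = 3*e/2 * prod_list (map rho w)"
proof -
  obtain \<alpha> where "word_map [F1, G e] w ` {0..3*e/2} = {\<alpha>..\<alpha> + 3*e/2 * prod_list (map rho w)}"
    using eps_img[OF e w] by auto
  moreover have "prod_list (map rho w) > 0" using prod_list_pos rho_pos by blast
  then have "e * prod_list (map rho w) > 0" using e by simp
  ultimately show ?thesis using e I_eps[OF e] by (simp add: diameter_closed_interval)
qed

lemma pressure_eps:
  assumes e: "e > 0"
  shows "nat_pressure [F1, G e] s = ereal (ln ((1/5) powr s + (1/3) powr s))"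
proof -
  define q where "q = 3*e/2"
  have q: "q > 0" using e by (simp add: q_def)
  have S: "(\<Sum>w\<in>words (length [F1, G e]) n. diameter (word_map [F1, G e] w ` cplifs_I [F1, G e]) powr s)
      = q powr s * ((1/5) powr s + (1/3) powr s) ^ n" for n
  proof -
    have "(\<Sum>w\<in>words (length [F1, G e]) n. diameter (word_map [F1, G e] w ` cplifs_I [F1, G e]) powr s)
        = (\<Sum>w\<in>words 2 n. q powr s * prod_list (map (\<lambda>i. rho i powr s) w))"
    proof (rule sum.cong)
      fix w assume "w \<in> words 2 n"
      then have w: "set w \<subseteq> {..<2}" by (auto simp: words_def numeral_2_eq_2)
      have p: "prod_list (map rho w) > 0" using prod_list_pos rho_pos by blast
      have d: "diameter (word_map [F1, G e] w ` cplifs_I [F1, G e]) = q * prod_list (map rho w)"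
        using eps_diam[OF e w] by (simp only: q_def)
      show "diameter (word_map [F1, G e] w ` cplifs_I [F1, G e]) powr s
          = q powr s * prod_list (map (\<lambda>i. rho i powr s) w)"
        unfolding d using q p by (simp add: powr_mult prod_list_powr[OF rho_pos])
    qed (simp add: numeral_2_eq_2)
    also have "\<dots> = q powr s * (\<Sum>i<2. rho i powr s) ^ n"
      by (simp add: sum_distrib_left[symmetric] sum_words_prod)
    also have "(\<Sum>i<2. rho i powr s) = (1/5) powr s + (1/3) powr s"
      by (simp add: numeral_2_eq_2 rho_def)
    finally show ?thesis .
  qed
  show ?thesis
    unfolding nat_pressure_def S
    by (rule pressure_limit[where ?C1.0="q powr s" and ?C2.0="q powr s"]) (use q in \<open>auto intro: add_pos_pos\<close>)
qed

lemma Bdec: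
  fixes a b :: real
  assumes "0 < a" "a < 1" "0 < b" "b < 1" "s < t"
  shows "a powr t + b powr t < a powr s + b powr s"
  using powr_less_mono'[of a s t] powr_less_mono'[of b s t] assms by simp

lemma dim_eps:
  assumes e: "e > 0" and s0: "(1/3) powr s0 + (1/5) powr s0 = 1"
  shows "natural_dim [F1, G e] = s0"
  by (rule natural_dim_eq[where B="\<lambda>s. (1/5) powr s + (1/3) powr s"])
     (use pressure_eps[OF e] Bdec s0 in \<open>auto intro: add_pos_pos\<close>)




lemma attractor_0: "attractor [F1, F2] = {0}"
proof (rule attractor_eq[where c="1/2"])
  fix f x y assume "f \<in> set [F1, F2]"
  then show "\<bar>f x - f y\<bar> \<le> 1/2 * \<bar>x - y\<bar>" using lip_F1 lip_F2 by auto
qed auto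

lemma I_0: "cplifs_I [F1, F2] = {(-1/2) .. 1/2}"
  unfolding cplifs_I_def attractor_0 by simp

lemma img_F1:
  assumes "u \<ge> 0" "v \<ge> 0"
  shows "F1 ` {(-u) .. v} = {(-(2/5*u)) .. 1/5* v}"
proof
  show "F1 ` {(-u) .. v} \<subseteq> {(-(2/5*u)) .. 1/5* v}" using assms by auto
  show "{(-(2/5*u)) .. 1/5* v} \<subseteq> F1 ` {(-u) .. v}"
  proof
    fix y assume y: "y \<in> {(-(2/5*u)) .. 1/5* v}"
    show "y \<in> F1 ` {(-u) .. v}"
    proof (cases "y < 0")
      case True
      then show ?thesis using y assms by (intro rev_image_eqI[of "5/2*y"]) auto
    next
      case False
      then show ?thesis using y assms by (intro rev_image_eqI[of "5*y"]) auto
    qed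
  qed
qed

lemma img_F2:
  shows "F2 ` {(-u) .. v} = {(-(1/3*u)) .. 1/3* v}"
  using image_mult_atLeastAtMost[of "1/3::real" "-u" v] by simp

definition na :: "nat \<Rightarrow> real" where "na i = (if i = 0 then 2/5 else 1/3)"
definition nb :: "nat \<Rightarrow> real" where "nb i = (if i = 0 then 1/5 else 1/3)"

lemma na_pos: "na i > 0" and nb_pos: "nb i > 0" by (simp_all add: na_def nb_def)

lemma nb_le_na: "prod_list (map nb w) \<le> prod_list (map na w)"
proof (induction w)
  case (Cons i w)
  have "nb i \<le> na i" by (simp add: na_def nb_def)
  moreover have "0 \<le> prod_list (map nb w)" by (rule less_imp_le[OF prod_list_pos[OF nb_pos]])
  moreover have "0 \<le> na i" by (rule less_imp_le[OF na_pos])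
  ultimately have "nb i * prod_list (map nb w) \<le> na i * prod_list (map na w)"
    using Cons.IH by (intro mult_mono)
  then show ?case by simp
qed simp

lemma img0:
  assumes w: "set w \<subseteq> {..<2}"
  shows "word_map [F1, F2] w ` {(-1/2) .. 1/2} = {(-(prod_list (map na w) / 2)) .. prod_list (map nb w) / 2}"
  using w
proof (induction w)
  case Nil
  then show ?case by simp
next
  case (Cons i w)
  define A where "A = prod_list (map na w)"
  define B where "B = prod_list (map nb w)"
  have A: "A > 0" unfolding A_def using prod_list_pos na_pos by blast
  have B: "B > 0" unfolding B_def using prod_list_pos nb_pos by blast
  have "word_map [F1, F2] (i # w) ` {(-1/2) .. 1/2} = ([F1, F2] ! i) ` (word_map [F1, F2] w ` {(-1/2) .. 1/2})"
    by (simp only: word_map_Cons image_comp)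
  also have "\<dots> = ([F1, F2] ! i) ` {(-(A/2)) .. B/2}" using Cons by (simp add: A_def B_def)
  finally have im: "word_map [F1, F2] (i # w) ` {(-1/2) .. 1/2} = ([F1, F2] ! i) ` {(-(A/2)) .. B/2}" .
  have "i = 0 \<or> i = 1" using Cons.prems by auto
  then show ?case
  proof
    assume i: "i = 0"
    have "([F1, F2] ! i) ` {(-(A/2)) .. B/2} = {(-(2/5*(A/2))) .. 1/5*(B/2)}"
      unfolding i nth_Cons_0 by (rule img_F1) (use A B in auto)
    then have "word_map [F1, F2] (i # w) ` {(-1/2) .. 1/2} = {(-(2/5*(A/2))) .. 1/5*(B/2)}"
      by (rule trans[OF im])
    also have "\<dots> = {(-(prod_list (map na (i # w)) / 2)) .. prod_list (map nb (i # w)) / 2}"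
    proof -
      have "prod_list (map na (i # w)) = 2/5 * A" unfolding A_def using i by (simp add: na_def)
      moreover have "prod_list (map nb (i # w)) = 1/5 * B" unfolding B_def using i by (simp add: nb_def)
      ultimately show ?thesis by simp
    qed
    finally show ?thesis .
  next
    assume i: "i = 1"
    have "([F1, F2] ! i) ` {(-(A/2)) .. B/2} = {(-(1/3*(A/2))) .. 1/3*(B/2)}"
      unfolding i by (simp only: One_nat_def nth_Cons_Suc nth_Cons_0 img_F2)
    then have "word_map [F1, F2] (i # w) ` {(-1/2) .. 1/2} = {(-(1/3*(A/2))) .. 1/3*(B/2)}"
      by (rule trans[OF im])
    also have "\<dots> = {(-(prod_list (map na (i # w)) / 2)) .. prod_list (map nb (i # w)) / 2}"
    proof -
      have "prod_list (map na (i # w)) = 1/3 * A" unfolding A_def using i by (simp add: na_def)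
      moreover have "prod_list (map nb (i # w)) = 1/3 * B" unfolding B_def using i by (simp add: nb_def)
      ultimately show ?thesis by simp
    qed
    finally show ?thesis .
  qed
qed




lemma kbound:
  fixes k s :: real
  assumes "1/2 \<le> k" "k \<le> 1"
  shows "min 1 ((1/2) powr s) \<le> k powr s \<and> k powr s \<le> max 1 ((1/2) powr s)"
proof (cases "s \<ge> 0")
  case True
  have "(1/2) powr s \<le> k powr s" using assms True by (intro powr_mono2) auto
  moreover have "k powr s \<le> 1 powr s" using assms True by (intro powr_mono2) auto
  ultimately show ?thesis by auto
next
  case False
  have "k powr s \<le> (1/2) powr s" using assms False by (intro powr_mono2') auto
  moreover have "1 powr s \<le> k powr s" using assms False by (intro powr_mono2') auto
  ultimately show ?thesis by auto
qed

lemma term_bound: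
  fixes a b s :: real
  assumes "a > 0" "b > 0" "b \<le> a"
  shows "min 1 ((1/2) powr s) * a powr s \<le> ((a+b)/2) powr s
       \<and> ((a+b)/2) powr s \<le> max 1 ((1/2) powr s) * a powr s"
proof -
  define k where "k = (a+b)/(2*a)"
  have k: "1/2 \<le> k" "k \<le> 1" using assms by (auto simp: k_def field_simps)
  have "(a+b)/2 = a * k" using assms by (simp add: k_def field_simps)
  then have eq: "((a+b)/2) powr s = a powr s * k powr s" using assms k by (simp add: powr_mult)
  have ap: "a powr s > 0" using assms by simp
  show ?thesis unfolding eq using kbound[OF k, of s] ap
    by (auto simp: mult.commute intro: mult_left_mono)
qed

lemma pressure0:
  "nat_pressure [F1, F2] s = ereal (ln ((2/5) powr s + (1/3) powr s))"
proof -
  define B where "B = (2/5) powr s + (1/3) powr s"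
  define C1 where "C1 = min 1 ((1/2::real) powr s)"
  define C2 where "C2 = max 1 ((1/2::real) powr s)"
  have B: "B > 0" unfolding B_def by (intro add_pos_pos) auto
  have C1: "C1 > 0" unfolding C1_def by simp
  have C2: "C2 > 0" unfolding C2_def by simp
  define T where "T w = prod_list (map (\<lambda>i. na i powr s) w)" for w
  have sumT: "(\<Sum>w\<in>words 2 n. T w) = B ^ n" for n
  proof -
    have "(\<Sum>w\<in>words 2 n. T w) = (\<Sum>i<2. na i powr s) ^ n"
      unfolding T_def by (rule sum_words_prod)
    also have "(\<Sum>i<2. na i powr s) = B" by (simp add: numeral_2_eq_2 na_def B_def)
    finally show ?thesis .
  qed
  have tb: "C1 * T w \<le> diameter (word_map [F1, F2] w ` cplifs_I [F1, F2]) powr s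
          \<and> diameter (word_map [F1, F2] w ` cplifs_I [F1, F2]) powr s \<le> C2 * T w"
    if w: "w \<in> words 2 n" for w n
  proof -
    have ws: "set w \<subseteq> {..<2}" using w by (simp add: words_def)
    define a where "a = prod_list (map na w)"
    define b where "b = prod_list (map nb w)"
    have a: "a > 0" unfolding a_def by (rule prod_list_pos[OF na_pos])
    have b: "b > 0" unfolding b_def by (rule prod_list_pos[OF nb_pos])
    have ba: "b \<le> a" unfolding a_def b_def by (rule nb_le_na)
    have d: "diameter (word_map [F1, F2] w ` cplifs_I [F1, F2]) = (a+b)/2"
      unfolding I_0 img0[OF ws] a_def[symmetric] b_def[symmetric]
      using a b by (simp add: diameter_closed_interval)
    have "T w = a powr s" unfolding T_def a_def by (rule prod_list_powr[OF na_pos, symmetric])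
    then show ?thesis unfolding d C1_def C2_def using term_bound[OF a b ba, of s] by simp
  qed
  have S: "C1 * B ^ n \<le> (\<Sum>w\<in>words (length [F1, F2]) n. diameter (word_map [F1, F2] w ` cplifs_I [F1, F2]) powr s)
      \<and> (\<Sum>w\<in>words (length [F1, F2]) n. diameter (word_map [F1, F2] w ` cplifs_I [F1, F2]) powr s) \<le> C2 * B ^ n" for n
  proof -
    have len: "length [F1, F2] = 2" by simp
    have "C1 * B ^ n = (\<Sum>w\<in>words 2 n. C1 * T w)" by (simp add: sumT sum_distrib_left[symmetric])
    also have "\<dots> \<le> (\<Sum>w\<in>words 2 n. diameter (word_map [F1, F2] w ` cplifs_I [F1, F2]) powr s)"
      by (rule sum_mono) (use tb in blast)
    finally have l: "C1 * B ^ n \<le> \<dots>" .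
    have "(\<Sum>w\<in>words 2 n. diameter (word_map [F1, F2] w ` cplifs_I [F1, F2]) powr s) \<le> (\<Sum>w\<in>words 2 n. C2 * T w)"
      by (rule sum_mono) (use tb in blast)
    also have "\<dots> = C2 * B ^ n" by (simp add: sumT sum_distrib_left[symmetric])
    finally show ?thesis using l unfolding len by simp
  qed
  show ?thesis unfolding nat_pressure_def B_def[symmetric]
    by (rule pressure_limit[OF C1 C2 B]) (use S in blast)
qed

lemma dim0:
  obtains s1 where "natural_dim [F1, F2] = s1" "(2/5) powr s1 + (1/3) powr s1 = 1" "s1 > 0"
proof -
  define B where "B s = (2/5::real) powr s + (1/3) powr s" for s
  have "\<exists>x\<ge>0. x \<le> 1 \<and> B x = 1"
  proof (rule IVT2)
    show "B 1 \<le> 1" by (simp add: B_def)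
    show "1 \<le> B 0" by (simp add: B_def)
    show "\<forall>x. 0 \<le> x \<and> x \<le> 1 \<longrightarrow> isCont B x" unfolding B_def by (auto intro!: continuous_intros)
  qed simp
  then obtain s1 where s1: "s1 \<ge> 0" "B s1 = 1" by auto
  have "s1 \<noteq> 0" using s1 by (auto simp: B_def)
  with s1 have pos: "s1 > 0" by simp
  have "natural_dim [F1, F2] = s1"
    by (rule natural_dim_eq[where B=B]) (use pressure0 Bdec s1 in \<open>auto simp: B_def intro: add_pos_pos\<close>)
  then show ?thesis using that s1 pos by (simp add: B_def)
qed


theorem mainTheorem6:
  fixes s0 :: real
  assumes "s0 > 0" and "(1/3) powr s0 + (1/5) powr s0 = 1"
  shows "(\<forall>\<epsilon>>0. natural_dim [(\<lambda>x::real. if x < 0 then 2/5 * x else 1/5 * x),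
                                (\<lambda>x. 1/3 * x + \<epsilon>)] = s0)
       \<and> natural_dim [(\<lambda>x::real. if x < 0 then 2/5 * x else 1/5 * x), (\<lambda>x. 1/3 * x)] > s0
       \<and> \<not> ((\<lambda>\<epsilon>. natural_dim [(\<lambda>x::real. if x < 0 then 2/5 * x else 1/5 * x),
                                (\<lambda>x. 1/3 * x + \<epsilon>)])
            \<longlongrightarrow> natural_dim [(\<lambda>x::real. if x < 0 then 2/5 * x else 1/5 * x), (\<lambda>x. 1/3 * x)])
           (at_right 0)"
  proof -
  have A: "\<forall>\<epsilon>>0. natural_dim [F1, G \<epsilon>] = s0" using dim_eps assms(2) by auto
  obtain s1 where s1: "natural_dim [F1, F2] = s1" "(2/5) powr s1 + (1/3) powr s1 = 1" "s1 > 0"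
    by (rule dim0)
  have gt: "s1 > s0"
  proof (rule ccontr)
    assume "\<not> s1 > s0"
    then have le: "s1 \<le> s0" by simp
    have "(1/5::real) powr s1 < (2/5) powr s1" using s1(3) by (intro powr_less_mono2) auto
    then have lt: "(1/5) powr s1 + (1/3) powr s1 < 1" using s1(2) by simp
    have "(1/5) powr s0 + (1/3) powr s0 \<le> (1/5::real) powr s1 + (1/3) powr s1"
    proof (cases "s1 = s0")
      case False
      then have "s1 < s0" using le by simp
      from Bdec[OF _ _ _ _ this, of "1/5" "1/3"] show ?thesis by simp
    qed simp
    then show False using lt assms(2) by simp
  qed
  have C: "\<not> ((\<lambda>\<epsilon>. natural_dim [F1, G \<epsilon>]) \<longlongrightarrow> s1) (at_right 0)"
  proof
    assume t: "((\<lambda>\<epsilon>. natural_dim [F1, G \<epsilon>]) \<longlongrightarrow> s1) (at_right 0)"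
    have "eventually (\<lambda>\<epsilon>. natural_dim [F1, G \<epsilon>] = s0) (at_right (0::real))"
      using eventually_at_right_less[of "0::real"] by eventually_elim (use A in auto)
    then have "((\<lambda>\<epsilon>. s0) \<longlongrightarrow> s1) (at_right (0::real))"
      using t by (rule Lim_transform_eventually[rotated])
    then have "s0 = s1" by (simp add: tendsto_const_iff trivial_limit_at_right_real)
    then show False using gt by simp
  qed
  show ?thesis using A gt C s1(1) by simp
qed

end
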